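(* Let $n>d$ be positive integers, $\alpha\in(0,1)$, $\hat\theta\in\mathbb{R}$, $\hat\sigma\in(0,\infty)$ fixed, and $\hat\theta_L=\hat\theta-t_{n-d,1-\alpha/2}\hat\sigma/\sqrt n$, $\hat\theta_U=\hat\theta+t_{n-d,1-\alpha/2}\hat\sigma/\sqrt n$. Then, as $m\to\infty$, $$1-\Phi\big(\sqrt{m/n}\,\delta_U(c)\big)\to\begin{cases}1 & c<\hat\theta_L,\\ 1/2 & c=\hat\theta_L,\\ 0 & c>\hat\theta_L,\end{cases}\qquad 1-\Phi\big(\sqrt{m/n}\,\delta_L(c)\big)\to\begin{cases}1 & c<\hat\theta_U,\\ 1/2 & c=\hat\theta_U,\\ 0 & c>\hat\theta_U.\end{cases}$$
   Context: $\Phi$ is the standard normal CDF. For $\nu>0$, $\delta\in\mathbb{R}$, $F_{\nu,\delta}$ is the CDF of the noncentral $t$-distribution with $\nu$ degrees of freedom and noncentrality $\delta$, and $t_{\nu,p}=F_{\nu,0}^{-1}(p)$. For a cutoff $c\in\mathbb{R}$ let $q(c)=\sqrt n\,(c-\hat\theta)/\hat\sigma$, and let $\delta_L(c),\delta_U(c)$ be the unique reals with $F_{n-d,\delta_L(c)}(q(c))=1-\alpha/2$ and $F_{n-d,\delta_U(c)}(q(c))=\alpha/2$. *)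

theory Defs
  imports "HOL-Probability.Probability"
begin

definition Phi :: "real \<Rightarrow> real" where
  "Phi x = cdf (density lborel std_normal_density) x"

definition chisq_density :: "real \<Rightarrow> real \<Rightarrow> real" where
  "chisq_density \<nu> v = (if v > 0 then v powr (\<nu>/2 - 1) * exp (- v/2) / (2 powr (\<nu>/2) * Gamma (\<nu>/2)) else 0)"

text \<open>CDF of the noncentral t distribution: law of (Z + delta) / sqrt(V/nu), Z standard normal,
  V chi-square(nu) independent; by conditioning on V,
  F(x) = P(Z \<le> x sqrt(V/nu) - delta) = E[Phi(x sqrt(V/nu) - delta)].\<close>
definition nct_cdf :: "real \<Rightarrow> real \<Rightarrow> real \<Rightarrow> real" where
  "nct_cdf \<nu> \<delta> x = (LINT v|lborel. chisq_density \<nu> v * Phi (x * sqrt (v / \<nu>) - \<delta>))"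

definition t_quantile :: "real \<Rightarrow> real \<Rightarrow> real" where
  "t_quantile \<nu> p = (THE x. nct_cdf \<nu> 0 x = p)"

definition qstat :: "nat \<Rightarrow> real \<Rightarrow> real \<Rightarrow> real \<Rightarrow> real" where
  "qstat n \<theta> \<sigma> c = sqrt (real n) * (c - \<theta>) / \<sigma>"

definition delta_L :: "nat \<Rightarrow> nat \<Rightarrow> real \<Rightarrow> real \<Rightarrow> real \<Rightarrow> real \<Rightarrow> real" where
  "delta_L n d \<alpha> \<theta> \<sigma> c = (THE \<delta>. nct_cdf (real n - real d) \<delta> (qstat n \<theta> \<sigma> c) = 1 - \<alpha>/2)"

definition delta_U :: "nat \<Rightarrow> nat \<Rightarrow> real \<Rightarrow> real \<Rightarrow> real \<Rightarrow> real \<Rightarrow> real" where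
  "delta_U n d \<alpha> \<theta> \<sigma> c = (THE \<delta>. nct_cdf (real n - real d) \<delta> (qstat n \<theta> \<sigma> c) = \<alpha>/2)"

end

theory Submission
  imports Defs "HOL-Real_Asymp.Real_Asymp"
begin


abbreviation "NN \<equiv> density lborel std_normal_density"

lemma NN_rd: "real_distribution NN"
  unfolding real_distribution_def real_distribution_axioms_def
  using prob_space_normal_density by simp

interpretation NN: real_distribution NN by (rule NN_rd)

lemma Phi_cdf: "Phi = cdf NN" by (rule ext) (simp add: Phi_def)

lemma Phi_mono: "x \<le> y \<Longrightarrow> Phi x \<le> Phi y"
  unfolding Phi_cdf by (rule NN.cdf_nondecreasing)

lemma Phi_nonneg: "0 \<le> Phi x"
  unfolding Phi_cdf by (rule NN.cdf_nonneg)

lemma Phi_le1: "Phi x \<le> 1"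
  unfolding Phi_cdf by (rule NN.cdf_bounded_prob)

lemma Phi_top: "(Phi \<longlongrightarrow> 1) at_top"
  unfolding Phi_cdf by (rule NN.cdf_lim_at_top_prob)

lemma Phi_bot: "(Phi \<longlongrightarrow> 0) at_bot"
  unfolding Phi_cdf by (rule NN.cdf_lim_at_bot)

lemma NN_emeasure: "A \<in> sets borel \<Longrightarrow> emeasure NN A = (\<integral>\<^sup>+v. ennreal (std_normal_density v * indicator A v) \<partial>lborel)"
  by (simp add: emeasure_density nn_integral_set_ennreal)

lemma NN_atom: "measure NN {x} = 0"
proof -
  have "emeasure NN {x} = (\<integral>\<^sup>+v. ennreal (std_normal_density v * indicator {x} v) \<partial>lborel)"
    by (rule NN_emeasure) simp
  also have "\<dots> = (\<integral>\<^sup>+v. 0 \<partial>(lborel::real measure))"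
  proof (rule nn_integral_cong_AE)
    show "AE v in lborel. ennreal (std_normal_density v * indicator {x} v) = 0"
      using AE_lborel_singleton[of x] by eventually_elim (auto simp: indicator_def)
  qed
  finally show ?thesis by (simp add: measure_def)
qed

lemma Phi_cont: "isCont Phi x"
  unfolding Phi_cdf using NN.isCont_cdf NN_atom by simp

lemma Phi_borel[measurable]: "Phi \<in> borel_measurable borel"
  by (intro borel_measurable_continuous_onI continuous_at_imp_continuous_on ballI Phi_cont)

lemma lborel_pos_not_AE:
  fixes P :: "real \<Rightarrow> bool"
  assumes "AE v in lborel. P v" and "\<And>v. v > 0 \<Longrightarrow> \<not> P v"
  shows False
proof -
  have "AE v in lborel. v \<notin> {0<..<1::real}"
    using assms(1) proof eventually_elim
    case (elim v) then show ?case using assms(2)[of v] by auto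
  qed
  then have "emeasure lborel {0<..<1::real} = 0"
    by (subst (asm) AE_iff_measurable[of "{0<..<1}"]) auto
  then show False by simp
qed

lemma Phi_pos_dens: "std_normal_density v \<noteq> 0"
  using normal_density_pos[of 1 0 v] by simp

lemma Phi_strict: assumes "x < y" shows "Phi x < Phi y"
proof -
  have "Phi y - Phi x = measure NN {x<..y}"
    unfolding Phi_cdf using NN.cdf_diff_eq[OF assms] by simp
  moreover have "emeasure NN {x<..y} \<noteq> 0"
  proof
    assume "emeasure NN {x<..y} = 0"
    then have "(\<integral>\<^sup>+v. ennreal (std_normal_density v * indicator {x<..y} v) \<partial>lborel) = 0"
      using NN_emeasure[of "{x<..y}"] by simp
    then have "AE v in lborel. ennreal (std_normal_density v * indicator {x<..y} v) = 0"
      by (subst (asm) nn_integral_0_iff_AE) auto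
    then have "AE v in lborel. v \<notin> {x<..<y}"
      by eventually_elim (auto simp: indicator_def Phi_pos_dens split: if_splits)
    then have "emeasure lborel {x<..<y} = 0"
      by (subst (asm) AE_iff_measurable[of "{x<..<y}"]) auto
    then show False using assms by simp
  qed
  ultimately show ?thesis
    by (metis NN.emeasure_eq_measure diff_gt_0_iff_gt ennreal_0 measure_nonneg order_le_less)
qed

lemma Phi_neg: "Phi (-x) = 1 - Phi x"
proof -
  have sym: "std_normal_density (-v) = std_normal_density v" for v
    by (simp add: std_normal_density_def)
  have "emeasure NN {..-x} = (\<integral>\<^sup>+v. ennreal (std_normal_density v * indicator {..-x} v) \<partial>lborel)"
    by (rule NN_emeasure) simp
  also have "\<dots> = ennreal \<bar>-1::real\<bar> * (\<integral>\<^sup>+v. ennreal (std_normal_density (0 + -1 * v) * indicator {..-x} (0 + -1 * v)) \<partial>lborel)"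
    by (rule nn_integral_real_affine) auto
  also have "\<dots> = (\<integral>\<^sup>+v. ennreal (std_normal_density v * indicator {x..} v) \<partial>lborel)"
    by (simp add: sym indicator_def)
  also have "\<dots> = emeasure NN {x..}"
    by (rule NN_emeasure[symmetric]) simp
  finally have "measure NN {..-x} = measure NN {x..}" by (simp add: measure_def)
  also have "{x..} = {x} \<union> {x<..}" by auto
  also have "measure NN \<dots> = measure NN {x} + measure NN {x<..}"
    by (rule NN.finite_measure_Union) auto
  also have "{x<..} = space NN - {..x}" by auto
  also have "measure NN \<dots> = 1 - measure NN {..x}"
    by (rule NN.prob_compl) simp
  finally show ?thesis using NN_atom unfolding Phi_cdf cdf_def by simp
qed



lemma chi_nonneg: "0 < nu \<Longrightarrow> 0 \<le> chisq_density nu v"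
  unfolding chisq_density_def using Gamma_real_pos[of "nu/2"] by auto

lemma chi_pos: "0 < nu \<Longrightarrow> 0 < v \<Longrightarrow> 0 < chisq_density nu v"
  unfolding chisq_density_def using Gamma_real_pos[of "nu/2"] by auto

lemma chi_meas[measurable]: "chisq_density nu \<in> borel_measurable borel"
  unfolding chisq_density_def by measurable

lemma chi_pt2:
  assumes "0 < nu"
  shows "chisq_density nu (0 + 2 * x) = (if x \<in> {0..} then x powr (nu/2 - 1) / exp x else 0) * (1 / (2 * Gamma (nu/2)))"
proof (cases "x > 0")
  case True
  define b where "b = nu/2 - 1"
  have P1: "(2 * x) powr b = 2 powr b * x powr b"
    using True by (simp add: powr_mult)
  have P2: "(2::real) powr (nu/2) = 2 powr b * 2"
    by (simp add: powr_diff b_def)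
  have E: "exp (- (2 * x) / 2) = 1 / exp x" by (simp add: exp_minus inverse_eq_divide)
  have g: "Gamma (nu/2) > 0" using Gamma_real_pos[of "nu/2"] assms by simp
  have "chisq_density nu (0 + 2 * x) = (2 * x) powr b * exp (- (2 * x) / 2) / (2 powr (nu/2) * Gamma (nu/2))"
    using True by (simp add: chisq_density_def b_def)
  also have "\<dots> = (2 powr b * x powr b) * (1 / exp x) / ((2 powr b * 2) * Gamma (nu/2))"
    by (simp only: P1 P2 E)
  also have "\<dots> = x powr b / exp x * (1 / (2 * Gamma (nu/2)))"
    using g by (simp add: field_simps)
  finally show ?thesis using True by (simp add: b_def)
next
  case False
  then show ?thesis unfolding chisq_density_def by auto
qed

lemma chi_nn: assumes "0 < nu" shows "(\<integral>\<^sup>+v. ennreal (chisq_density nu v) \<partial>lborel) = 1"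
proof -
  define a where "a = nu/2"
  have a: "0 < a" using assms by (simp add: a_def)
  define f where "f t = (if t \<in> {0..} then t powr (a - 1) / exp t else 0)" for t :: real
  have "((\<lambda>t. t powr (a - 1) / exp t) has_integral Gamma a) {0..}"
    by (rule Gamma_integral_real[OF a])
  then have I: "(f has_integral Gamma a) UNIV"
    unfolding f_def by (subst has_integral_restrict_UNIV)
  have fm[measurable]: "f \<in> borel_measurable borel" unfolding f_def by measurable
  have fnn: "\<And>t. 0 \<le> f t" unfolding f_def by auto
  have F: "(\<integral>\<^sup>+t. ennreal (f t) \<partial>lborel) = ennreal (Gamma a)"
    by (rule nn_integral_has_integral_lborel[OF fm fnn I])
  have "(\<integral>\<^sup>+v. ennreal (chisq_density nu v) \<partial>lborel)
      = ennreal \<bar>2::real\<bar> * (\<integral>\<^sup>+v. ennreal (chisq_density nu (0 + 2 * v)) \<partial>lborel)"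
    by (rule nn_integral_real_affine) auto
  also have "\<dots> = 2 * (\<integral>\<^sup>+v. ennreal (f v) * ennreal (1 / (2 * Gamma a)) \<partial>lborel)"
  proof -
    have "ennreal (chisq_density nu (0 + 2 * v)) = ennreal (f v) * ennreal (1 / (2 * Gamma a))" for v
      unfolding chi_pt2[OF assms] using Gamma_real_pos[OF a] fnn[of v]
      by (subst ennreal_mult) (auto simp: f_def a_def)
    then show ?thesis by simp
  qed
  also have "\<dots> = 2 * (ennreal (Gamma a) * ennreal (1 / (2 * Gamma a)))"
    by (subst nn_integral_multc) (auto simp: F)
  also have "\<dots> = 1"
  proof -
    have e: "ennreal (Gamma a) * ennreal (1 / (2 * Gamma a)) = ennreal (1/2)"
    proof -
      have "ennreal (Gamma a) * ennreal (1 / (2 * Gamma a)) = ennreal (Gamma a * (1 / (2 * Gamma a)))"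
        using Gamma_real_pos[OF a] by (intro ennreal_mult[symmetric]) auto
      also have "Gamma a * (1 / (2 * Gamma a)) = 1/2" using Gamma_real_pos[OF a] by simp
      finally show ?thesis .
    qed
    have "(2::ennreal) * ennreal (1/2) = ennreal 2 * ennreal (1/2)" by simp
    also have "\<dots> = ennreal (2 * (1/2))" by (rule ennreal_mult[symmetric]) auto
    also have "\<dots> = 1" by simp
    finally show ?thesis unfolding e .
  qed
  finally show ?thesis .
qed

lemma chi_int: assumes "0 < nu" shows "integrable lborel (chisq_density nu)"
proof (rule integrableI_nn_integral_finite[where x=1])
  show "AE x in lborel. 0 \<le> chisq_density nu x" using chi_nonneg[OF assms] by simp
  show "(\<integral>\<^sup>+x. ennreal (chisq_density nu x) \<partial>lborel) = ennreal 1" using chi_nn[OF assms] by simp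
qed simp

lemma chi_integral: assumes "0 < nu" shows "integral\<^sup>L lborel (chisq_density nu) = 1"
proof -
  have "integral\<^sup>L lborel (chisq_density nu) = enn2real (\<integral>\<^sup>+x. ennreal (chisq_density nu x) \<partial>lborel)"
    by (rule integral_eq_nn_integral) (auto simp: chi_nonneg assms)
  then show ?thesis using chi_nn[OF assms] by simp
qed



lemma chi_zero: "v \<le> 0 \<Longrightarrow> chisq_density nu v = 0"
  by (simp add: chisq_density_def)

lemma int_pg:
  assumes nu: "0 < nu" and [measurable]: "g \<in> borel_measurable borel" and b: "\<And>v. \<bar>g v\<bar> \<le> 1"
  shows "integrable lborel (\<lambda>v. chisq_density nu v * g v)"
proof (rule Bochner_Integration.integrable_bound[OF chi_int[OF nu]])
  show "AE v in lborel. norm (chisq_density nu v * g v) \<le> norm (chisq_density nu v)"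
    using b chi_nonneg[OF nu] by (auto simp: abs_mult intro!: mult_left_le)
qed measurable

lemma nct_DC:
  assumes nu: "0 < nu" and gm[measurable]: "\<And>i. g i \<in> borel_measurable borel"
    and hm[measurable]: "h \<in> borel_measurable borel"
    and gb: "\<And>i v. \<bar>g i v\<bar> \<le> 1" and lim: "\<And>v. v > 0 \<Longrightarrow> (\<lambda>i. g i v) \<longlonglongrightarrow> h v"
  shows "(\<lambda>i. LINT v|lborel. chisq_density nu v * g i v) \<longlonglongrightarrow> (LINT v|lborel. chisq_density nu v * h v)"
proof (rule integral_dominated_convergence[where w = "chisq_density nu"])
  show "integrable lborel (chisq_density nu)" by (rule chi_int[OF nu])
  show "AE v in lborel. (\<lambda>i. chisq_density nu v * g i v) \<longlonglongrightarrow> chisq_density nu v * h v"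
  proof (rule AE_I2)
    fix v :: real show "(\<lambda>i. chisq_density nu v * g i v) \<longlonglongrightarrow> chisq_density nu v * h v"
    proof (cases "v > 0")
      case True then show ?thesis by (intro tendsto_mult_left lim)
    next
      case False then show ?thesis by (simp add: chi_zero)
    qed
  qed
  show "AE v in lborel. norm (chisq_density nu v * g i v) \<le> chisq_density nu v" for i
    using gb chi_nonneg[OF nu] by (auto simp: abs_mult intro!: mult_left_le)
qed measurable

lemma int_pos:
  fixes k :: "real \<Rightarrow> real"
  assumes "integrable lborel k" "\<And>v. 0 \<le> k v" "\<And>v. v > 0 \<Longrightarrow> 0 < k v"
  shows "0 < integral\<^sup>L lborel k"
proof -
  have "0 \<le> integral\<^sup>L lborel k" using assms(2) by (simp add: integral_nonneg)
  moreover have "integral\<^sup>L lborel k \<noteq> 0"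
  proof
    assume "integral\<^sup>L lborel k = 0"
    then have "AE v in lborel. k v = 0"
      using integral_nonneg_eq_0_iff_AE[OF assms(1)] assms(2) by simp
    then show False by (rule lborel_pos_not_AE) (use assms(3) in force)
  qed
  ultimately show ?thesis by simp
qed

abbreviation F :: "real \<Rightarrow> real \<Rightarrow> real \<Rightarrow> real" where
  "F nu d x \<equiv> nct_cdf nu d x"

lemma F_def': "F nu d x = (LINT v|lborel. chisq_density nu v * Phi (x * sqrt (v / nu) - d))"
  by (simp add: nct_cdf_def)

lemma int_F: "0 < nu \<Longrightarrow> integrable lborel (\<lambda>v. chisq_density nu v * Phi (x * sqrt (v / nu) - d))"
  by (rule int_pg) (auto simp: abs_le_iff Phi_le1 intro: order_trans[OF _ Phi_nonneg])

lemma F_strict_d: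
  assumes nu: "0 < nu" and "d1 < d2" shows "F nu d2 x < F nu d1 x"
proof -
  have "0 < (LINT v|lborel. chisq_density nu v * Phi (x * sqrt (v / nu) - d1) - chisq_density nu v * Phi (x * sqrt (v / nu) - d2))"
  proof (rule int_pos)
    show "integrable lborel (\<lambda>v. chisq_density nu v * Phi (x * sqrt (v / nu) - d1) - chisq_density nu v * Phi (x * sqrt (v / nu) - d2))"
      using int_F[OF nu] by simp
    show "0 \<le> chisq_density nu v * Phi (x * sqrt (v / nu) - d1) - chisq_density nu v * Phi (x * sqrt (v / nu) - d2)" for v
      using chi_nonneg[OF nu, of v] Phi_mono[of "x * sqrt (v / nu) - d2" "x * sqrt (v / nu) - d1"] assms(2)
      by (simp add: right_diff_distrib[symmetric])
    show "0 < chisq_density nu v * Phi (x * sqrt (v / nu) - d1) - chisq_density nu v * Phi (x * sqrt (v / nu) - d2)" if "v > 0" for v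
      using chi_pos[OF nu that] Phi_strict[of "x * sqrt (v / nu) - d2" "x * sqrt (v / nu) - d1"] assms(2)
      by (simp add: right_diff_distrib[symmetric])
  qed
  also have "\<dots> = F nu d1 x - F nu d2 x"
    unfolding F_def' by (rule Bochner_Integration.integral_diff) (use int_F[OF nu] in auto)
  finally show ?thesis by simp
qed

lemma F_strict_x:
  assumes nu: "0 < nu" and "x1 < x2" shows "F nu d x1 < F nu d x2"
proof -
  have "0 < (LINT v|lborel. chisq_density nu v * Phi (x2 * sqrt (v / nu) - d) - chisq_density nu v * Phi (x1 * sqrt (v / nu) - d))"
  proof (rule int_pos)
    show "integrable lborel (\<lambda>v. chisq_density nu v * Phi (x2 * sqrt (v / nu) - d) - chisq_density nu v * Phi (x1 * sqrt (v / nu) - d))"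
      using int_F[OF nu] by simp
    show "0 \<le> chisq_density nu v * Phi (x2 * sqrt (v / nu) - d) - chisq_density nu v * Phi (x1 * sqrt (v / nu) - d)" for v
    proof (cases "v > 0")
      case True
      then have "x1 * sqrt (v / nu) \<le> x2 * sqrt (v / nu)" using assms nu by (intro mult_right_mono) auto
      then show ?thesis using chi_nonneg[OF nu, of v] Phi_mono[of "x1 * sqrt (v / nu) - d" "x2 * sqrt (v / nu) - d"]
        by (simp add: right_diff_distrib[symmetric])
    next
      case False then show ?thesis by (simp add: chi_zero)
    qed
    show "0 < chisq_density nu v * Phi (x2 * sqrt (v / nu) - d) - chisq_density nu v * Phi (x1 * sqrt (v / nu) - d)" if "v > 0" for v
    proof -
      have "x1 * sqrt (v / nu) < x2 * sqrt (v / nu)" using assms nu that by (intro mult_strict_right_mono) auto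
      then show ?thesis using chi_pos[OF nu that] Phi_strict[of "x1 * sqrt (v / nu) - d" "x2 * sqrt (v / nu) - d"]
        by (simp add: right_diff_distrib[symmetric])
    qed
  qed
  also have "\<dots> = F nu d x2 - F nu d x1"
    unfolding F_def' by (rule Bochner_Integration.integral_diff) (use int_F[OF nu] in auto)
  finally show ?thesis by simp
qed

lemma Phi_abs: "\<bar>Phi y\<bar> \<le> 1"
  using Phi_le1[of y] Phi_nonneg[of y] by auto

lemma F_cont_d: assumes nu: "0 < nu" shows "isCont (\<lambda>d. F nu d x) d0"
proof (rule continuous_at_sequentiallyI)
  fix u assume u: "u \<longlonglongrightarrow> d0"
  show "(\<lambda>n. F nu (u n) x) \<longlonglongrightarrow> F nu d0 x"
    unfolding F_def'
    by (rule nct_DC[OF nu]) (auto intro!: isCont_tendsto_compose[OF Phi_cont] tendsto_intros u simp: Phi_abs)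
qed

lemma F_cont_x: assumes nu: "0 < nu" shows "isCont (\<lambda>x. F nu d x) x0"
proof (rule continuous_at_sequentiallyI)
  fix u assume u: "u \<longlonglongrightarrow> x0"
  show "(\<lambda>n. F nu d (u n)) \<longlonglongrightarrow> F nu d x0"
    unfolding F_def'
    by (rule nct_DC[OF nu]) (auto intro!: isCont_tendsto_compose[OF Phi_cont] tendsto_intros u simp: Phi_abs)
qed

lemma F_lim_d_top: assumes nu: "0 < nu" shows "(\<lambda>i. F nu (real i) x) \<longlonglongrightarrow> 0"
proof -
  have "(\<lambda>i. F nu (real i) x) \<longlonglongrightarrow> (LINT v|lborel. chisq_density nu v * (\<lambda>_. 0) v)"
    unfolding F_def'
  proof (rule nct_DC[OF nu])
    fix v :: real
    have "filterlim (\<lambda>i::nat. x * sqrt (v / nu) - real i) at_bot sequentially" by real_asymp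
    then show "(\<lambda>i. Phi (x * sqrt (v / nu) - real i)) \<longlonglongrightarrow> 0"
      by (rule filterlim_compose[OF Phi_bot])
  qed (auto simp: Phi_abs)
  then show ?thesis by simp
qed

lemma F_lim_d_bot: assumes nu: "0 < nu" shows "(\<lambda>i. F nu (- real i) x) \<longlonglongrightarrow> 1"
proof -
  have "(\<lambda>i. F nu (- real i) x) \<longlonglongrightarrow> (LINT v|lborel. chisq_density nu v * (\<lambda>_. 1) v)"
    unfolding F_def'
  proof (rule nct_DC[OF nu])
    fix v :: real
    have "filterlim (\<lambda>i::nat. x * sqrt (v / nu) - - real i) at_top sequentially" by real_asymp
    then show "(\<lambda>i. Phi (x * sqrt (v / nu) - - real i)) \<longlonglongrightarrow> 1"
      by (rule filterlim_compose[OF Phi_top])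
  qed (auto simp: Phi_abs)
  then show ?thesis using chi_integral[OF nu] by simp
qed

lemma F_lim_x_top: assumes nu: "0 < nu" shows "(\<lambda>i. F nu 0 (real i)) \<longlonglongrightarrow> 1"
proof -
  have "(\<lambda>i. F nu 0 (real i)) \<longlonglongrightarrow> (LINT v|lborel. chisq_density nu v * (\<lambda>_. 1) v)"
    unfolding F_def'
  proof (rule nct_DC[OF nu])
    fix v :: real assume v: "v > 0"
    then have s: "sqrt (v / nu) > 0" using nu by simp
    have "filterlim (\<lambda>i::nat. real i * sqrt (v / nu) - 0) at_top sequentially"
      using s by real_asymp
    then show "(\<lambda>i. Phi (real i * sqrt (v / nu) - 0)) \<longlonglongrightarrow> 1"
      by (rule filterlim_compose[OF Phi_top])
  qed (auto simp: Phi_abs)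
  then show ?thesis using chi_integral[OF nu] by simp
qed

lemma F_lim_x_bot: assumes nu: "0 < nu" shows "(\<lambda>i. F nu 0 (- real i)) \<longlonglongrightarrow> 0"
proof -
  have "(\<lambda>i. F nu 0 (- real i)) \<longlonglongrightarrow> (LINT v|lborel. chisq_density nu v * (\<lambda>_. 0) v)"
    unfolding F_def'
  proof (rule nct_DC[OF nu])
    fix v :: real assume v: "v > 0"
    then have s: "sqrt (v / nu) > 0" using nu by simp
    have "filterlim (\<lambda>i::nat. - real i * sqrt (v / nu) - 0) at_bot sequentially"
      using s by real_asymp
    then show "(\<lambda>i. Phi (- real i * sqrt (v / nu) - 0)) \<longlonglongrightarrow> 0"
      by (rule filterlim_compose[OF Phi_bot])
  qed (auto simp: Phi_abs)
  then show ?thesis by simp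
qed

lemma F_sym: assumes nu: "0 < nu" shows "F nu 0 (- x) = 1 - F nu 0 x"
proof -
  have "F nu 0 (- x) = (LINT v|lborel. chisq_density nu v - chisq_density nu v * Phi (x * sqrt (v / nu) - 0))"
    unfolding F_def' by (rule Bochner_Integration.integral_cong) (auto simp: Phi_neg algebra_simps)
  also have "\<dots> = 1 - F nu 0 x"
    unfolding F_def' using chi_integral[OF nu]
    by (subst Bochner_Integration.integral_diff) (use int_F[OF nu, of x 0, simplified] chi_int[OF nu] in auto)
  finally show ?thesis .
qed



lemma ex_d: assumes nu: "0 < nu" and y: "0 < y" "y < 1" shows "\<exists>!d. F nu d x = y"
proof -
  have "eventually (\<lambda>i. F nu (real i) x < y) sequentially"
    using order_tendstoD(2)[OF F_lim_d_top[OF nu] y(1)] .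
  moreover have "eventually (\<lambda>i. y < F nu (- real i) x) sequentially"
    using order_tendstoD(1)[OF F_lim_d_bot[OF nu] y(2)] .
  ultimately have "eventually (\<lambda>i. F nu (real i) x < y \<and> y < F nu (- real i) x) sequentially"
    by eventually_elim auto
  then obtain i where i: "F nu (real i) x < y" "y < F nu (- real i) x"
    by (auto simp: eventually_sequentially)
  have "\<exists>d. - real i \<le> d \<and> d \<le> real i \<and> F nu d x = y"
    by (rule IVT2') (use i in \<open>auto intro!: continuous_at_imp_continuous_on F_cont_d[OF nu]\<close>)
  then obtain d where "F nu d x = y" by blast
  moreover have "F nu d' x = y \<Longrightarrow> d' = d" for d'
    using F_strict_d[OF nu, of d d' x] F_strict_d[OF nu, of d' d x] \<open>F nu d x = y\<close>
    by (cases d d' rule: linorder_cases) auto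
  ultimately show ?thesis by blast
qed

lemma ex_x: assumes nu: "0 < nu" and y: "0 < y" "y < 1" shows "\<exists>!x. F nu 0 x = y"
proof -
  have "eventually (\<lambda>i. F nu 0 (- real i) < y) sequentially"
    using order_tendstoD(2)[OF F_lim_x_bot[OF nu] y(1)] .
  moreover have "eventually (\<lambda>i. y < F nu 0 (real i)) sequentially"
    using order_tendstoD(1)[OF F_lim_x_top[OF nu] y(2)] .
  ultimately have "eventually (\<lambda>i. F nu 0 (- real i) < y \<and> y < F nu 0 (real i)) sequentially"
    by eventually_elim auto
  then obtain i where i: "F nu 0 (- real i) < y" "y < F nu 0 (real i)"
    by (auto simp: eventually_sequentially)
  have "\<exists>x. - real i \<le> x \<and> x \<le> real i \<and> F nu 0 x = y"
    by (rule IVT') (use i in \<open>auto intro!: continuous_at_imp_continuous_on F_cont_x[OF nu]\<close>)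
  then obtain x where "F nu 0 x = y" by blast
  moreover have "F nu 0 x' = y \<Longrightarrow> x' = x" for x'
    using F_strict_x[OF nu, of x x' 0] F_strict_x[OF nu, of x' x 0] \<open>F nu 0 x = y\<close>
    by (cases x x' rule: linorder_cases) auto
  ultimately show ?thesis by blast
qed

lemma F_less_d_iff: "0 < nu \<Longrightarrow> F nu d1 x < F nu d2 x \<longleftrightarrow> d2 < d1"
  using F_strict_d[of nu d1 d2 x] F_strict_d[of nu d2 d1 x]
  by (cases d1 d2 rule: linorder_cases) auto

lemma F_less_x_iff: "0 < nu \<Longrightarrow> F nu d x1 < F nu d x2 \<longleftrightarrow> x1 < x2"
  using F_strict_x[of nu x1 x2 d] F_strict_x[of nu x2 x1 d]
  by (cases x1 x2 rule: linorder_cases) auto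

lemma sign_lemma:
  assumes nu: "0 < nu" and eq: "F nu dd q = F nu 0 y"
  shows "(dd < 0 \<longleftrightarrow> q < y) \<and> (dd = 0 \<longleftrightarrow> q = y)"
proof -
  have 1: "dd < 0 \<longleftrightarrow> q < y"
    using F_less_d_iff[OF nu, of 0 q dd] F_less_x_iff[OF nu, of 0 q y] eq by simp
  have 2: "dd > 0 \<longleftrightarrow> y < q"
    using F_less_d_iff[OF nu, of dd q 0] F_less_x_iff[OF nu, of 0 y q] eq by simp
  from 1 2 show ?thesis by (metis linorder_neqE_linordered_idom order_less_irrefl)
qed

lemma Phi_0: "Phi 0 = 1/2"
  using Phi_neg[of 0] by simp

lemma sqrt_top: "0 < e \<Longrightarrow> 0 < (r::real) \<Longrightarrow> filterlim (\<lambda>m::nat. sqrt (real m / r) * e) at_top sequentially"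
  by real_asymp

lemma final_lim:
  assumes n: "0 < n"
  shows "((\<lambda>m::nat. 1 - Phi (sqrt (real m / real n) * dd))
            \<longlongrightarrow> (if dd < 0 then 1 else if dd = 0 then 1/2 else 0)) sequentially"
proof -
  have nr: "real n > 0" using n by simp
  consider "dd < 0" | "dd = 0" | "dd > 0" by linarith
  then show ?thesis
  proof cases
    case 1
    have "filterlim (\<lambda>m::nat. sqrt (real m / real n) * (-dd)) at_top sequentially"
      using 1 nr by (intro sqrt_top) auto
    then have "filterlim (\<lambda>m::nat. - (sqrt (real m / real n) * (-dd))) at_bot sequentially"
      by (simp add: filterlim_uminus_at_bot)
    then have "filterlim (\<lambda>m::nat. sqrt (real m / real n) * dd) at_bot sequentially"
      by simp
    then have "((\<lambda>m. Phi (sqrt (real m / real n) * dd)) \<longlongrightarrow> 0) sequentially"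
      by (rule filterlim_compose[OF Phi_bot])
    then show ?thesis using 1 by (auto intro!: tendsto_eq_intros)
  next
    case 2 then show ?thesis by (simp add: Phi_0)
  next
    case 3
    have "filterlim (\<lambda>m::nat. sqrt (real m / real n) * dd) at_top sequentially"
      using 3 nr by real_asymp
    then have "((\<lambda>m. Phi (sqrt (real m / real n) * dd)) \<longlongrightarrow> 1) sequentially"
      by (rule filterlim_compose[OF Phi_top])
    then show ?thesis using 3 by (auto intro!: tendsto_eq_intros)
  qed
qed

theorem corollary2:
  fixes n d :: nat and \<alpha> \<theta> \<sigma> c :: real
  assumes "0 < d" and "d < n" and "0 < \<alpha>" and "\<alpha> < 1" and "0 < \<sigma>"
  defines "\<theta>L \<equiv> \<theta> - t_quantile (real n - real d) (1 - \<alpha>/2) * \<sigma> / sqrt (real n)"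
      and "\<theta>U \<equiv> \<theta> + t_quantile (real n - real d) (1 - \<alpha>/2) * \<sigma> / sqrt (real n)"
  shows "((\<lambda>m::nat. 1 - Phi (sqrt (real m / real n) * delta_U n d \<alpha> \<theta> \<sigma> c))
            \<longlongrightarrow> (if c < \<theta>L then 1 else if c = \<theta>L then 1/2 else 0)) sequentially \<and>
         ((\<lambda>m::nat. 1 - Phi (sqrt (real m / real n) * delta_L n d \<alpha> \<theta> \<sigma> c))
            \<longlongrightarrow> (if c < \<theta>U then 1 else if c = \<theta>U then 1/2 else 0)) sequentially"
proof -
  define nu where "nu = real n - real d"
  have nu: "0 < nu" using assms(2) by (simp add: nu_def)
  have n: "0 < n" using assms(2) by simp
  have sn: "sqrt (real n) > 0" using n by simp
  define t where "t = t_quantile nu (1 - \<alpha>/2)"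
  define q where "q = qstat n \<theta> \<sigma> c"
  have a1: "0 < 1 - \<alpha>/2" "1 - \<alpha>/2 < 1" "0 < \<alpha>/2" "\<alpha>/2 < 1" using assms(3,4) by auto
  have tq: "F nu 0 t = 1 - \<alpha>/2"
    unfolding t_def t_quantile_def by (rule theI'[OF ex_x[OF nu a1(1,2)]])
  have tq': "F nu 0 (-t) = \<alpha>/2" using F_sym[OF nu, of t] tq by simp
  have dU: "F nu (delta_U n d \<alpha> \<theta> \<sigma> c) q = \<alpha>/2"
    unfolding delta_U_def q_def nu_def[symmetric] by (rule theI'[OF ex_d[OF nu a1(3,4)]])
  have dL: "F nu (delta_L n d \<alpha> \<theta> \<sigma> c) q = 1 - \<alpha>/2"
    unfolding delta_L_def q_def nu_def[symmetric] by (rule theI'[OF ex_d[OF nu a1(1,2)]])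
  have sU: "(delta_U n d \<alpha> \<theta> \<sigma> c < 0 \<longleftrightarrow> q < -t) \<and> (delta_U n d \<alpha> \<theta> \<sigma> c = 0 \<longleftrightarrow> q = -t)"
    by (rule sign_lemma[OF nu]) (simp add: dU tq')
  have sL: "(delta_L n d \<alpha> \<theta> \<sigma> c < 0 \<longleftrightarrow> q < t) \<and> (delta_L n d \<alpha> \<theta> \<sigma> c = 0 \<longleftrightarrow> q = t)"
    by (rule sign_lemma[OF nu]) (simp add: dL tq)
  define k where "k = sqrt (real n) / \<sigma>"
  have qL: "q + t = k * (c - \<theta>L)"
    unfolding k_def q_def qstat_def \<theta>L_def t_def nu_def using sn assms(5) by (simp add: field_simps)
  have qU: "q - t = k * (c - \<theta>U)"
    unfolding k_def q_def qstat_def \<theta>U_def t_def nu_def using sn assms(5) by (simp add: field_simps)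
  have pos: "k > 0" using sn assms(5) by (simp add: k_def)
  have cL: "(c < \<theta>L \<longleftrightarrow> q < -t) \<and> (c = \<theta>L \<longleftrightarrow> q = -t)"
  proof -
    have "q < -t \<longleftrightarrow> q + t < 0" by linarith
    moreover have "q = -t \<longleftrightarrow> q + t = 0" by linarith
    ultimately show ?thesis unfolding qL using pos
      by (auto simp: mult_less_0_iff)
  qed
  have cU: "(c < \<theta>U \<longleftrightarrow> q < t) \<and> (c = \<theta>U \<longleftrightarrow> q = t)"
  proof -
    have "q < t \<longleftrightarrow> q - t < 0" by linarith
    moreover have "q = t \<longleftrightarrow> q - t = 0" by linarith
    ultimately show ?thesis unfolding qU using pos
      by (auto simp: mult_less_0_iff)
  qed
  have eU: "(if c < \<theta>L then 1 else if c = \<theta>L then 1/2 else 0) =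
     (if delta_U n d \<alpha> \<theta> \<sigma> c < 0 then 1 else if delta_U n d \<alpha> \<theta> \<sigma> c = 0 then 1/2 else (0::real))"
    using sU cL by simp
  have eL: "(if c < \<theta>U then 1 else if c = \<theta>U then 1/2 else 0) =
     (if delta_L n d \<alpha> \<theta> \<sigma> c < 0 then 1 else if delta_L n d \<alpha> \<theta> \<sigma> c = 0 then 1/2 else (0::real))"
    using sL cU by simp
  show ?thesis
    unfolding eU eL using final_lim[OF n, of "delta_U n d \<alpha> \<theta> \<sigma> c"] final_lim[OF n, of "delta_L n d \<alpha> \<theta> \<sigma> c"]
    by blast
qed


end
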